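(* Let $a<b$ be real numbers, let $f:[a,b]\to\mathbb{R}$, and let $c\in\left[a,\frac{a+b}{2}\right]$ be such that: (i) $f(c-x)+f(c+x)=2f(c)$ whenever $c\pm x\in[a,b]$; (ii) the restriction $f|_{[c,b]}$ is convex. Then \[ f(b_\mu)\le\int_a^b f(x)\,d\mu(x) \] for every Borel probability measure $\mu$ on $[a,b]$ whose barycenter $b_\mu=\int_a^b x\,d\mu(x)$ lies in the interval $[2c-a,b]$. Moreover, if in (ii) the restriction $f|_{[c,b]}$ is instead assumed concave (with (i) unchanged), then the reverse inequality $f(b_\mu)\ge\int_a^b f(x)\,d\mu(x)$ holds for every such $\mu$.
   Context: For a Borel probability measure $\mu$ on $[a,b]$, its barycenter is $b_\mu=\int_a^b x\,d\mu(x)$. *)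

theory Defs
  imports "HOL-Probability.Probability"
begin

definition barycenter :: "real measure \<Rightarrow> real" where
  "barycenter M = integral\<^sup>L M (\<lambda>x. x)"

end

theory Submission imports Defs begin

lemma meas_f:
  fixes a b c :: real and f :: "real \<Rightarrow> real"
  assumes ab: "a < b" and c: "c \<in> {a..(a+b)/2}"
    and sym: "\<forall>x. c - x \<in> {a..b} \<and> c + x \<in> {a..b} \<longrightarrow> f (c - x) + f (c + x) = 2 * f c"
    and cv: "convex_on {c..b} f"
  shows "(\<lambda>x. if x \<in> {a..b} then f x else 0) \<in> borel_measurable borel"
proof (rule borel_measurable_continuous_countable_exceptions[where X="{a,c,b}"])
  let ?g = "\<lambda>x. if x \<in> {a..b} then f x else 0"
  have cf: "continuous_on {c<..<b} f"
    by (rule convex_on_continuous) (auto intro: convex_on_subset[OF cv])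
  have eq: "- {a,c,b} = {..<a} \<union> {a<..<c} \<union> {c<..<b} \<union> {b<..}"
    using ab c by auto
  have c1: "continuous_on {..<a} ?g"
    by (rule continuous_on_cong[THEN iffD2, OF refl _ continuous_on_const]) auto
  have c4: "continuous_on {b<..} ?g"
    by (rule continuous_on_cong[THEN iffD2, OF refl _ continuous_on_const]) auto
  have c3: "continuous_on {c<..<b} ?g"
    by (rule continuous_on_cong[THEN iffD2, OF refl _ cf]) (use c in auto)
  have c2a: "continuous_on {a<..<c} (\<lambda>x. 2 * f c - f (2*c - x))"
    by (intro continuous_intros continuous_on_compose2[OF cf]) (use c in auto)
  have c2: "continuous_on {a<..<c} ?g"
  proof (rule continuous_on_cong[THEN iffD2, OF refl _ c2a])
    fix x assume x: "x \<in> {a<..<c}"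
    have "c - (c - x) \<in> {a..b} \<and> c + (c - x) \<in> {a..b}" using x c by auto
    then have "f (c - (c - x)) + f (c + (c - x)) = 2 * f c"
      using sym by blast
    then show "?g x = 2 * f c - f (2*c - x)" using x c by auto
  qed
  show "continuous_on (- {a,c,b}) ?g"
    unfolding eq by (intro continuous_on_open_Un c1 c2 c3 c4 open_Un) auto
qed auto


lemma ae_point:
  fixes f :: "real \<Rightarrow> real"
  assumes "prob_space M" "f \<in> borel_measurable M" "AE x in M. x = e"
  shows "(\<integral>x. f x \<partial>M) = f e"
proof -
  interpret prob_space M by fact
  have "(\<integral>x. f x \<partial>M) = (\<integral>x. f e \<partial>M)"
    by (rule integral_cong_AE) (use assms in auto)
  then show ?thesis by (simp add: prob_space)
qed

lemma main:
  fixes a b c :: real and f :: "real \<Rightarrow> real"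
  assumes ab: "a < b" and c: "c \<in> {a..(a+b)/2}"
    and sym: "\<forall>x. c - x \<in> {a..b} \<and> c + x \<in> {a..b} \<longrightarrow> f (c - x) + f (c + x) = 2 * f c"
    and cv: "convex_on {c..b} f"
    and P: "prob_space M" and S: "sets M = sets (restrict_space borel {a..b})"
    and t: "barycenter M \<in> {2*c - a..b}"
  shows "f (barycenter M) \<le> (\<integral>x. f x \<partial>M)"
proof -
  interpret prob_space M by fact
  have sp: "space M = {a..b}"
    using sets_eq_imp_space_eq[OF S] by (simp add: space_restrict_space)
  have hsym: "f x + f (2*c - x) = 2 * f c" if x: "x \<in> {a..c}" for x
  proof -
    have "c - (c - x) \<in> {a..b} \<and> c + (c - x) \<in> {a..b}" using x c by auto
    then have "f (c - (c - x)) + f (c + (c - x)) = 2 * f c"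
      using sym by blast
    then show ?thesis by simp
  qed
  have MS: "measurable M borel = measurable (restrict_space borel {a..b}) borel"
    by (rule measurable_cong_sets[OF S refl])
  have "(\<lambda>x. if x \<in> {a..b} then f x else 0) \<in> borel_measurable M"
    unfolding MS by (rule measurable_restrict_space1[OF meas_f[OF ab c sym cv]])
  then have fm: "f \<in> borel_measurable M"
    by (rule measurable_cong[THEN iffD1, rotated]) (simp add: sp)
  have idm: "(\<lambda>x. x) \<in> borel_measurable M"
    unfolding MS by (rule measurable_restrict_space1) simp
  have idi: "integrable M (\<lambda>x. x)"
    by (rule integrable_const_bound[where B="\<bar>a\<bar>+\<bar>b\<bar>"]) (auto simp: sp idm intro!: AE_I2)
  define t where "t = barycenter M"
  have tdef: "t = (\<integral>x. x \<partial>M)" unfolding t_def barycenter_def ..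
  have tab: "2*c - a \<le> t" "t \<le> b" using t unfolding t_def by auto
  consider "t = b" | "t \<le> c" | "c < t" "t < b" using tab by linarith
  then have "f t \<le> (\<integral>x. f x \<partial>M)"
  proof cases
    case 1
    have "(\<integral>x. b - x \<partial>M) = 0" using idi tdef 1 by (simp add: prob_space)
    moreover have "AE x in M. 0 \<le> b - x" by (rule AE_I2) (simp add: sp)
    ultimately have "AE x in M. b - x = 0"
      using integral_nonneg_eq_0_iff_AE[of M "\<lambda>x. b - x"] idi by auto
    then have "AE x in M. x = b" by auto
    then show ?thesis using ae_point[OF P fm] 1 by simp
  next
    case 2
    then have ta: "t = a" using tab c by auto
    have "(\<integral>x. x - a \<partial>M) = 0" using idi tdef ta by (simp add: prob_space)
    moreover have "AE x in M. 0 \<le> x - a" by (rule AE_I2) (simp add: sp)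
    ultimately have "AE x in M. x - a = 0"
      using integral_nonneg_eq_0_iff_AE[of M "\<lambda>x. x - a"] idi by auto
    then have "AE x in M. x = a" by auto
    then show ?thesis using ae_point[OF P fm] ta by simp
  next
    case 3
    let ?S = "(\<lambda>y. (f y - f t)/(y - t)) ` {t<..b}"
    define s where "s = Inf ?S"
    have slope: "(f t - f x)/(t - x) \<le> (f y - f t)/(y - t)"
      if "c \<le> x" "x < t" "t < y" "y \<le> b" for x y
    proof -
      have "(f x - f t) / (x - t) \<le> (f x - f y) / (x - y)"
           "(f x - f y) / (x - y) \<le> (f t - f y) / (t - y)"
        using convex_on_slope_le[OF cv, of x y t] that by auto
      moreover have "(f x - f t) / (x - t) = (f t - f x)/(t - x)"
        "(f t - f y) / (t - y) = (f y - f t)/(y - t)"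
        by (metis minus_diff_eq minus_divide_divide)+
      ultimately show ?thesis by linarith
    qed
    have bdd: "bdd_below ?S"
      by (rule bdd_belowI[where m="(f t - f c)/(t - c)"]) (use slope 3 c in auto)
    have right: "f t + s*(y - t) \<le> f y" if "t < y" "y \<le> b" for y
    proof -
      have "s \<le> (f y - f t)/(y - t)" unfolding s_def
        by (rule cInf_lower[OF _ bdd]) (use that in auto)
      then show ?thesis using that by (simp add: le_divide_eq algebra_simps)
    qed
    have left: "f t + s*(x - t) \<le> f x" if "c \<le> x" "x < t" for x
    proof -
      have "(f t - f x)/(t - x) \<le> s" unfolding s_def
        by (rule cInf_greatest) (use that 3 slope in auto)
      then have "f t - f x \<le> s * (t - x)" using that by (simp add: divide_le_eq)
      then show ?thesis by (simp add: algebra_simps)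
    qed
    have L1: "f t + s*(x - t) \<le> f x" if "c \<le> x" "x \<le> b" for x
      using left right that by (cases "x < t"; cases "t < x") auto
    have L2: "f t + s*(x - t) \<le> f x" if "a \<le> x" "x < c" for x
    proof -
      define y where "y = 2*c - x"
      define u where "u = (y - c)/(t - c)"
      have yin: "c < y" "y \<le> t" using that tab unfolding y_def by auto
      have u01: "0 \<le> u" "u \<le> 1" unfolding u_def using yin 3 by auto
      have h: "u*(t-c) = y - c" unfolding u_def using 3 by simp
      have "(1-u)*c+u*t = c + u*(t-c)" by (simp add: algebra_simps)
      with h have yeq: "y = (1-u)*c + u*t" by linarith
      have "f ((1 - u) *\<^sub>R c + u *\<^sub>R t) \<le> (1 - u) * f c + u * f t"
        by (rule convex_onD[OF cv]) (use u01 3 c tab in auto)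
      then have fy: "f y \<le> (1 - u) * f c + u * f t" using yeq by simp
      have D: "0 \<le> (1+u)*(f c - f t - s*(c-t))"
        using L1[of c] c ab u01 by (intro mult_nonneg_nonneg) auto
      have fx: "f x = 2 * f c - f y" using hsym[of x] that unfolding y_def by auto
      have "2*f c - f y - (f t + s*(2*c - y - t)) = (1+u)*(f c - f t - s*(c-t)) + ((1-u)*f c + u*f t - f y)"
        by (simp add: yeq algebra_simps)
      moreover have "x = 2*c - y" unfolding y_def by simp
      ultimately show ?thesis using fx fy D by simp
    qed
    have L: "f t + s*(x - t) \<le> f x" if "x \<in> space M" for x
      using L1 L2 that c by (cases "x < c") (auto simp: sp)
    define K where "K = \<bar>f t\<bar> + \<bar>s\<bar>*(b-a)"
    have LK: "\<bar>f t + s*(z - t)\<bar> \<le> K" if "a \<le> z" "z \<le> b" for z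
    proof -
      have "\<bar>s*(z - t)\<bar> \<le> \<bar>s\<bar>*(b-a)" unfolding abs_mult
        by (rule mult_left_mono) (use that tab c in auto)
      then show ?thesis unfolding K_def by linarith
    qed
    have U1: "f x \<le> \<bar>f c\<bar> + \<bar>f b\<bar>" if "c \<le> x" "x \<le> b" for x
    proof -
      define u where "u = (x - c)/(b - c)"
      have cb: "c < b" using c ab by auto
      have u01: "0 \<le> u" "u \<le> 1" unfolding u_def using that cb by auto
      have h: "u*(b-c) = x - c" unfolding u_def using cb by simp
      have "(1-u)*c+u*b = c + u*(b-c)" by (simp add: algebra_simps)
      with h have xeq: "x = (1-u)*c + u*b" by linarith
      have "f ((1 - u) *\<^sub>R c + u *\<^sub>R b) \<le> (1 - u) * f c + u * f b"
        by (rule convex_onD[OF cv]) (use u01 cb in auto)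
      then have "f x \<le> (1 - u) * f c + u * f b" using xeq by simp
      moreover have "(1-u) * f c \<le> (1-u) * \<bar>f c\<bar>" "u * f b \<le> u * \<bar>f b\<bar>"
        using u01 by (auto intro: mult_left_mono)
      moreover have "(1-u) * \<bar>f c\<bar> \<le> \<bar>f c\<bar>" "u * \<bar>f b\<bar> \<le> \<bar>f b\<bar>"
        using u01 by (auto intro: mult_left_le_one_le)
      ultimately show ?thesis by linarith
    qed
    have bound: "\<bar>f x\<bar> \<le> 3*\<bar>f c\<bar> + \<bar>f b\<bar> + K" if x: "x \<in> space M" for x
    proof -
      have xab: "a \<le> x" "x \<le> b" using x sp by auto
      have lo: "- K \<le> f x" using L[OF x] LK[OF xab] by linarith
      have hi: "f x \<le> 2*\<bar>f c\<bar> + \<bar>f b\<bar> + K"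
      proof (cases "x < c")
        case True
        have "f x = 2 * f c - f (2*c - x)" using hsym[of x] True xab by auto
        moreover have "f t + s*((2*c - x) - t) \<le> f (2*c - x)" using L1[of "2*c-x"] True xab c by auto
        moreover have "\<bar>f t + s*((2*c - x) - t)\<bar> \<le> K" using LK[of "2*c-x"] True xab c by auto
        ultimately show ?thesis by linarith
      next
        case False
        then show ?thesis using U1[of x] xab LK[OF xab] by auto
      qed
      show ?thesis using lo hi by linarith
    qed
    have fi: "integrable M f"
      by (rule integrable_const_bound[where B="3*\<bar>f c\<bar> + \<bar>f b\<bar> + K"]) (use bound fm in auto)
    have Li: "integrable M (\<lambda>x. f t + s*(x - t))" using idi by simp
    have "(\<integral>x. f t + s*(x - t) \<partial>M) = f t + s * ((\<integral>x. x \<partial>M) - t)"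
      using idi by (simp add: prob_space)
    also have "\<dots> = f t" using tdef by simp
    finally have "f t = (\<integral>x. f t + s*(x - t) \<partial>M)" by simp
    also have "\<dots> \<le> (\<integral>x. f x \<partial>M)"
      by (rule integral_mono[OF Li fi L])
    finally show ?thesis .
  qed
  then show ?thesis unfolding t_def .
qed

theorem theorem1:
  fixes a b c :: real and f :: "real \<Rightarrow> real"
  assumes "a < b"
    and "c \<in> {a..(a+b)/2}"
    and "\<forall>x. c - x \<in> {a..b} \<and> c + x \<in> {a..b} \<longrightarrow> f (c - x) + f (c + x) = 2 * f c"
  shows "(convex_on {c..b} f \<longrightarrow>
            (\<forall>M :: real measure. prob_space M \<and> sets M = sets (restrict_space borel {a..b})
               \<and> barycenter M \<in> {2*c - a..b}
               \<longrightarrow> f (barycenter M) \<le> (\<integral>x. f x \<partial>M)))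
       \<and> (concave_on {c..b} f \<longrightarrow>
            (\<forall>M :: real measure. prob_space M \<and> sets M = sets (restrict_space borel {a..b})
               \<and> barycenter M \<in> {2*c - a..b}
               \<longrightarrow> f (barycenter M) \<ge> (\<integral>x. f x \<partial>M)))"
proof (intro conjI impI allI)
  fix M :: "real measure"
  assume cv: "convex_on {c..b} f"
    and H: "prob_space M \<and> sets M = sets (restrict_space borel {a..b}) \<and> barycenter M \<in> {2*c - a..b}"
  show "f (barycenter M) \<le> (\<integral>x. f x \<partial>M)"
    using main[OF assms cv] H by blast
next
  fix M :: "real measure"
  assume cv: "concave_on {c..b} f"
    and H: "prob_space M \<and> sets M = sets (restrict_space borel {a..b}) \<and> barycenter M \<in> {2*c - a..b}"
  have cv': "convex_on {c..b} (\<lambda>x. - f x)" using cv by (simp add: concave_on_def)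
  have sym': "\<forall>x. c - x \<in> {a..b} \<and> c + x \<in> {a..b} \<longrightarrow> - f (c - x) + - f (c + x) = 2 * - f c"
    using assms(3) by force
  have "- f (barycenter M) \<le> (\<integral>x. - f x \<partial>M)"
    using main[OF assms(1,2) sym' cv'] H by blast
  then show "f (barycenter M) \<ge> (\<integral>x. f x \<partial>M)" by simp
qed

end
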